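(* Let $F\in\mathrm{Fl}_n^{\ge 0}$ and let $I$ be an extremal index of $P(F)$. Then there exist extremal indices $R_1\subsetneq R_2\subsetneq\cdots\subsetneq R_{n-1}$ of $P(F)$ with $|R_i|=i$ such that $I$ is one of the $R_i$ (so that $R_1\subsetneq\cdots\subsetneq R_{n-1}\subsetneq[n]$ is a flag of subsets of $[n]$ consisting of extremal indices).
   Context: $\mathrm{Fl}_n$ is the real complete flag variety, flags represented by invertible $n\times n$ real matrices whose top $i$ rows span the $i$-th subspace; $P_I(F)$ is the minor of a representing matrix in rows $1,\dots,|I|$ and columns $I$. $\mathrm{Fl}_n^{\ge 0}$ is the Euclidean closure of the set of flags having a totally positive representing matrix. Gale order on $k$-subsets: $\{i_1<\dots<i_k\}\le\{j_1<\dots<j_k\}$ iff $i_t\le j_t$ for all $t$. For $P=P(F)$ and a $k$-subset $I$: let $B=\{i\in I:\exists j\notin I,\ i<j,\ P_{(I\setminus i)\cup j}\ne0\}$; if $P_I\ne0$ and $B\ne\emptyset$, set $b=\max B$, $a=\max\{j\notin I:P_{(I\setminus b)\cup j}\ne0\}$, $\Xi_P(I)=(I\setminus b)\cup a$; otherwise $\Xi_P(I)=I$. For $k\in[n-1]$ let $I_k$ be the Gale-minimal $k$-subset with $P_{I_k}\ne0$; the extremal indices of $P$ are the sets $\Xi_P^m(I_k)$, $m\ge0$, $k\in[n-1]$. *)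

theory Defs
  imports Complex_Main "Jordan_Normal_Form.Determinant"
begin

(* Matrices are functions nat => nat => real, used with 1-based indices in [n] = {1..n}. *)
type_synonym rmat = "nat \<Rightarrow> nat \<Rightarrow> real"

(* the t-th smallest element (0-based) of a finite set of naturals *)
definition elt :: "nat set \<Rightarrow> nat \<Rightarrow> nat" where
  "elt S t = sorted_list_of_set S ! t"

definition minor :: "rmat \<Rightarrow> nat set \<Rightarrow> nat set \<Rightarrow> real" where
  "minor A R C = det (mat (card R) (card R) (\<lambda>(i,j). A (elt R i) (elt C j)))"

definition plucker :: "rmat \<Rightarrow> nat set \<Rightarrow> real" where
  "plucker A I = minor A {1..card I} I"

definition mat_mult :: "nat \<Rightarrow> rmat \<Rightarrow> rmat \<Rightarrow> rmat" where
  "mat_mult n A B = (\<lambda>i j. \<Sum>l=1..n. A i l * B l j)"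

definition invertible_n :: "nat \<Rightarrow> rmat \<Rightarrow> bool" where
  "invertible_n n A \<longleftrightarrow> minor A {1..n} {1..n} \<noteq> 0"

definition totally_positive :: "nat \<Rightarrow> rmat \<Rightarrow> bool" where
  "totally_positive n A \<longleftrightarrow>
     (\<forall>R C. R \<subseteq> {1..n} \<and> C \<subseteq> {1..n} \<and> R \<noteq> {} \<and> card R = card C \<longrightarrow> minor A R C > 0)"

(* invertible lower triangular matrices: exactly the change of representative of a flag *)
definition lower_tri_inv :: "nat \<Rightarrow> rmat \<Rightarrow> bool" where
  "lower_tri_inv n L \<longleftrightarrow> (\<forall>i\<in>{1..n}. \<forall>j\<in>{1..n}. i < j \<longrightarrow> L i j = 0) \<and> (\<forall>i\<in>{1..n}. L i i \<noteq> 0)"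

(* A represents a flag which has a totally positive representing matrix *)
definition tp_flag_rep :: "nat \<Rightarrow> rmat \<Rightarrow> bool" where
  "tp_flag_rep n A \<longleftrightarrow> invertible_n n A \<and>
     (\<exists>L. lower_tri_inv n L \<and> totally_positive n (mat_mult n L A))"

(* M represents a flag in the closure Fl_n^{>=0}: it is a limit of representatives of
   flags having a totally positive representing matrix *)
definition tnn_flag_rep :: "nat \<Rightarrow> rmat \<Rightarrow> bool" where
  "tnn_flag_rep n M \<longleftrightarrow> invertible_n n M \<and>
     (\<exists>A :: nat \<Rightarrow> rmat. (\<forall>k. tp_flag_rep n (A k)) \<and>
        (\<forall>i\<in>{1..n}. \<forall>j\<in>{1..n}. (\<lambda>k. A k i j) \<longlonglongrightarrow> M i j))"

definition gale_le :: "nat set \<Rightarrow> nat set \<Rightarrow> bool" where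
  "gale_le I J \<longleftrightarrow> card I = card J \<and> (\<forall>t < card I. elt I t \<le> elt J t)"

definition Xi :: "nat \<Rightarrow> (nat set \<Rightarrow> real) \<Rightarrow> nat set \<Rightarrow> nat set" where
  "Xi n P I =
    (let B = {i \<in> I. \<exists>j \<in> {1..n} - I. i < j \<and> P ((I - {i}) \<union> {j}) \<noteq> 0} in
     if P I \<noteq> 0 \<and> B \<noteq> {} then
       (let b = Max B;
            a = Max {j \<in> {1..n} - I. P ((I - {b}) \<union> {j}) \<noteq> 0}
        in (I - {b}) \<union> {a})
     else I)"

definition gale_min :: "nat \<Rightarrow> (nat set \<Rightarrow> real) \<Rightarrow> nat \<Rightarrow> nat set" where
  "gale_min n P k = (THE I. I \<subseteq> {1..n} \<and> card I = k \<and> P I \<noteq> 0 \<and>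
       (\<forall>J. J \<subseteq> {1..n} \<and> card J = k \<and> P J \<noteq> 0 \<longrightarrow> gale_le I J))"

definition extremal_indices :: "nat \<Rightarrow> rmat \<Rightarrow> nat set set" where
  "extremal_indices n M =
     {(Xi n (plucker M) ^^ m) (gale_min n (plucker M) k) | m k. k \<in> {1..n-1}}"

end

theory Submission imports Defs begin

definition rep :: "rmat \<Rightarrow> nat \<Rightarrow> nat set \<Rightarrow> nat \<Rightarrow> (nat \<Rightarrow> real) \<Rightarrow> bool" where
  "rep M k S e c \<longleftrightarrow> (\<forall>i\<in>{1..k}. M i e = (\<Sum>s\<in>S. c s * M i s))"

definition inspan :: "rmat \<Rightarrow> nat \<Rightarrow> nat set \<Rightarrow> nat \<Rightarrow> bool" where
  "inspan M k S e \<longleftrightarrow> (\<exists>c. rep M k S e c)"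

definition indep :: "rmat \<Rightarrow> nat \<Rightarrow> nat set \<Rightarrow> bool" where
  "indep M k S \<longleftrightarrow> (\<forall>c. (\<forall>i\<in>{1..k}. (\<Sum>s\<in>S. c s * M i s) = 0) \<longrightarrow> (\<forall>s\<in>S. c s = 0))"

lemma kernel_exists:
  fixes A :: "nat \<Rightarrow> nat \<Rightarrow> real"
  assumes "finite R"
  shows "finite C \<Longrightarrow> card R < card C \<Longrightarrow>
     \<exists>c. (\<exists>j\<in>C. c j \<noteq> 0) \<and> (\<forall>i\<in>R. (\<Sum>j\<in>C. A i j * c j) = 0)"
  using assms
proof (induction R arbitrary: C A rule: finite_induct)
  case empty
  then obtain j where "j \<in> C" by fastforce
  then show ?case by (intro exI[of _ "\<lambda>_. 1"]) auto
next
  case (insert r R)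
  have cR: "card (insert r R) = Suc (card R)" using insert.hyps by simp
  show ?case
  proof (cases "\<forall>j\<in>C. A r j = 0")
    case True
    obtain c where c: "\<exists>j\<in>C. c j \<noteq> 0" "\<forall>i\<in>R. (\<Sum>j\<in>C. A i j * c j) = 0"
      using insert.IH[of C A] insert.prems cR by auto
    then show ?thesis using True by (intro exI[of _ c]) auto
  next
    case False
    then obtain j0 where j0: "j0 \<in> C" "A r j0 \<noteq> 0" by auto
    define C' where "C' = C - {j0}"
    define B where "B = (\<lambda>i j. A i j - A i j0 * A r j / A r j0)"
    have fC': "finite C'" using insert.prems C'_def by auto
    have "card C' = card C - 1" using j0 insert.prems C'_def by simp
    hence ccC': "card R < card C'" using insert.prems cR by linarith
    obtain c' where c': "\<exists>j\<in>C'. c' j \<noteq> 0" "\<forall>i\<in>R. (\<Sum>j\<in>C'. B i j * c' j) = 0"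
      using insert.IH[OF fC' ccC', of B] by auto
    define c where "c = (\<lambda>j. if j = j0 then - (\<Sum>j\<in>C'. A r j * c' j) / A r j0 else c' j)"
    have split: "(\<Sum>j\<in>C. f j) = f j0 + (\<Sum>j\<in>C'. f j)" for f :: "nat \<Rightarrow> real"
      using sum.remove[OF insert.prems(1) j0(1)] C'_def by simp
    have cC': "(\<Sum>j\<in>C'. A i j * c j) = (\<Sum>j\<in>C'. A i j * c' j)" for i
      by (rule sum.cong) (auto simp: c_def C'_def)
    have row: "(\<Sum>j\<in>C. A i j * c j) = A i j0 * c j0 + (\<Sum>j\<in>C'. A i j * c' j)" for i
      using split[of "\<lambda>j. A i j * c j"] cC' by simp
    have "\<forall>i\<in>insert r R. (\<Sum>j\<in>C. A i j * c j) = 0"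
    proof
      fix i assume i: "i \<in> insert r R"
      show "(\<Sum>j\<in>C. A i j * c j) = 0"
      proof (cases "i = r")
        case True
        then show ?thesis using row[of r] j0(2) by (simp add: c_def)
      next
        case False
        with i have iR: "i \<in> R" by auto
        have "(\<Sum>j\<in>C'. B i j * c' j) = (\<Sum>j\<in>C'. A i j * c' j) - A i j0 / A r j0 * (\<Sum>j\<in>C'. A r j * c' j)"
          by (simp add: B_def sum_subtractf sum_distrib_left algebra_simps)
        then have "(\<Sum>j\<in>C'. A i j * c' j) = A i j0 / A r j0 * (\<Sum>j\<in>C'. A r j * c' j)"
          using c'(2) iR by simp
        then show ?thesis using row[of i] by (simp add: c_def)
      qed
    qed
    moreover have "\<exists>j\<in>C. c j \<noteq> 0" using c'(1) by (auto simp: c_def C'_def)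
    ultimately show ?thesis by blast
  qed
qed


lemma indep_card_le:
  assumes "indep M k S" "finite S" shows "card S \<le> k"
proof (rule ccontr)
  assume "\<not> card S \<le> k"
  hence "card {1..k} < card S" by simp
  then obtain c where c: "\<exists>j\<in>S. c j \<noteq> 0" "\<forall>i\<in>{1..k}. (\<Sum>j\<in>S. M i j * c j) = 0"
    using kernel_exists[of "{1..k}" S M] assms(2) by auto
  have "\<forall>i\<in>{1..k}. (\<Sum>s\<in>S. c s * M i s) = 0" using c(2) by (simp add: mult.commute)
  with assms(1) c(1) show False unfolding indep_def by blast
qed

lemma steinitz:
  assumes "indep M k A" "finite A" "finite B" "\<forall>a\<in>A. inspan M k B a"
  shows "card A \<le> card B"
proof (rule ccontr)
  assume "\<not> card A \<le> card B"
  hence lt: "card B < card A" by simp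
  from assms(4) obtain co where co: "\<forall>a\<in>A. rep M k B a (co a)"
    unfolding inspan_def by metis
  obtain d where d: "\<exists>j\<in>A. d j \<noteq> 0" "\<forall>b\<in>B. (\<Sum>a\<in>A. co a b * d a) = 0"
    using kernel_exists[of B A "\<lambda>b a. co a b"] assms lt by auto
  have "\<forall>i\<in>{1..k}. (\<Sum>a\<in>A. d a * M i a) = 0"
  proof
    fix i assume i: "i \<in> {1..k}"
    have "(\<Sum>a\<in>A. d a * M i a) = (\<Sum>a\<in>A. d a * (\<Sum>b\<in>B. co a b * M i b))"
      using co i unfolding rep_def by (intro sum.cong) auto
    also have "\<dots> = (\<Sum>b\<in>B. (\<Sum>a\<in>A. co a b * d a) * M i b)"
      by (simp add: sum_distrib_left sum_distrib_right sum.swap[of _ B A] algebra_simps)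
    also have "\<dots> = 0" using d(2) by simp
    finally show "(\<Sum>a\<in>A. d a * M i a) = 0" .
  qed
  with assms(1) d(1) show False unfolding indep_def by blast
qed

lemma rep_zero_ext:
  assumes "rep M k S e c" "S \<subseteq> T" "finite T"
  shows "rep M k T e (\<lambda>x. if x \<in> S then c x else 0)"
proof -
  have "(\<Sum>x\<in>T. (if x \<in> S then c x else 0) * M i x) = (\<Sum>x\<in>S. c x * M i x)" for i
  proof -
    have "(\<Sum>x\<in>T. (if x \<in> S then c x else 0) * M i x) = (\<Sum>x\<in>T. (if x \<in> S then c x * M i x else 0))"
      by (rule sum.cong) auto
    also have "\<dots> = (\<Sum>x\<in>T \<inter> S. c x * M i x)" using assms(3) by (simp add: sum.inter_restrict)
    also have "T \<inter> S = S" using assms(2) by auto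
    finally show ?thesis .
  qed
  then show ?thesis using assms(1) unfolding rep_def by simp
qed

lemma inspan_mono:
  assumes "inspan M k S e" "S \<subseteq> T" "finite T" shows "inspan M k T e"
  using assms rep_zero_ext unfolding inspan_def by blast

lemma inspan_mem:
  assumes "e \<in> S" "finite S" shows "inspan M k S e"
proof -
  have "rep M k S e (\<lambda>x. if x = e then 1 else 0)"
  proof -
    have "(\<Sum>s\<in>S. (if s = e then 1 else 0) * M i s) = M i e" for i
    proof -
      have "(\<Sum>s\<in>S. (if s = e then 1 else 0) * M i s) = (\<Sum>s\<in>S. if s = e then M i s else 0)"
        by (rule sum.cong) auto
      also have "\<dots> = M i e" using assms by (simp add: sum.delta)
      finally show ?thesis .
    qed
    then show ?thesis unfolding rep_def by simp
  qed
  then show ?thesis unfolding inspan_def by blast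
qed

lemma inspan_trans:
  assumes "finite S" "finite T" "\<forall>x\<in>T. inspan M k S x" "inspan M k T e"
  shows "inspan M k S e"
proof -
  from assms(3) obtain co where co: "\<forall>x\<in>T. rep M k S x (co x)"
    unfolding inspan_def by metis
  from assms(4) obtain d where d: "rep M k T e d" unfolding inspan_def by blast
  have "rep M k S e (\<lambda>s. \<Sum>x\<in>T. d x * co x s)"
    unfolding rep_def
  proof
    fix i assume i: "i \<in> {1..k}"
    have "M i e = (\<Sum>x\<in>T. d x * M i x)" using d i unfolding rep_def by auto
    also have "\<dots> = (\<Sum>x\<in>T. d x * (\<Sum>s\<in>S. co x s * M i s))"
      using co i unfolding rep_def by (intro sum.cong) auto
    also have "\<dots> = (\<Sum>s\<in>S. (\<Sum>x\<in>T. d x * co x s) * M i s)"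
      by (simp add: sum_distrib_left sum_distrib_right sum.swap[of _ S T] algebra_simps)
    finally show "M i e = (\<Sum>s\<in>S. (\<Sum>x\<in>T. d x * co x s) * M i s)" .
  qed
  then show ?thesis unfolding inspan_def by blast
qed

lemma indep_subset:
  assumes "indep M k S" "T \<subseteq> S" "finite S" shows "indep M k T"
  unfolding indep_def
proof (intro allI impI)
  fix c assume h: "\<forall>i\<in>{1..k}. (\<Sum>s\<in>T. c s * M i s) = 0"
  define c' where "c' = (\<lambda>x. if x \<in> T then c x else 0)"
  have "(\<Sum>s\<in>S. c' s * M i s) = (\<Sum>s\<in>T. c s * M i s)" for i
  proof -
    have "(\<Sum>s\<in>S. c' s * M i s) = (\<Sum>s\<in>S. (if s \<in> T then c s * M i s else 0))"
      by (rule sum.cong) (auto simp: c'_def)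
    also have "\<dots> = (\<Sum>s\<in>S \<inter> T. c s * M i s)" using assms(3) by (simp add: sum.inter_restrict)
    also have "S \<inter> T = T" using assms(2) by auto
    finally show ?thesis .
  qed
  with h have "\<forall>i\<in>{1..k}. (\<Sum>s\<in>S. c' s * M i s) = 0" by simp
  with assms(1) have "\<forall>s\<in>S. c' s = 0" unfolding indep_def by blast
  then show "\<forall>s\<in>T. c s = 0" using assms(2) unfolding c'_def by (metis subsetD)
qed

lemma indep_not_inspan:
  assumes "indep M k S" "e \<in> S" "finite S" shows "\<not> inspan M k (S - {e}) e"
proof
  assume "inspan M k (S - {e}) e"
  then obtain c where c: "rep M k (S - {e}) e c" unfolding inspan_def by blast
  define c' where "c' = (\<lambda>x. if x = e then -1 else c x)"
  have "(\<Sum>s\<in>S. c' s * M i s) = - M i e + (\<Sum>s\<in>S - {e}. c s * M i s)" for i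
  proof -
    have "(\<Sum>s\<in>S. c' s * M i s) = c' e * M i e + (\<Sum>s\<in>S - {e}. c' s * M i s)"
      using sum.remove[OF assms(3) assms(2)] by simp
    also have "(\<Sum>s\<in>S - {e}. c' s * M i s) = (\<Sum>s\<in>S - {e}. c s * M i s)"
      by (rule sum.cong) (auto simp: c'_def)
    finally show ?thesis by (simp add: c'_def)
  qed
  with c have "\<forall>i\<in>{1..k}. (\<Sum>s\<in>S. c' s * M i s) = 0" unfolding rep_def by simp
  with assms(1,2) have "c' e = 0" unfolding indep_def by blast
  then show False by (simp add: c'_def)
qed

lemma indep_insert:
  assumes "indep M k S" "finite S" "\<not> inspan M k S e" shows "indep M k (insert e S)"
  unfolding indep_def
proof (intro allI impI)
  fix c assume h: "\<forall>i\<in>{1..k}. (\<Sum>s\<in>insert e S. c s * M i s) = 0"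
  have eS: "e \<notin> S" using assms(2,3) inspan_mem by blast
  have h2: "\<forall>i\<in>{1..k}. c e * M i e + (\<Sum>s\<in>S. c s * M i s) = 0"
    using h eS assms(2) by simp
  have ce: "c e = 0"
  proof (rule ccontr)
    assume ne: "c e \<noteq> 0"
    have "rep M k S e (\<lambda>s. - c s / c e)"
      unfolding rep_def
    proof
      fix i assume i: "i \<in> {1..k}"
      have "(\<Sum>s\<in>S. - c s / c e * M i s) = (- 1 / c e) * (\<Sum>s\<in>S. c s * M i s)"
        by (simp add: sum_distrib_left)
      also have "(\<Sum>s\<in>S. c s * M i s) = - (c e * M i e)" using h2 i by (simp add: eq_neg_iff_add_eq_0 add.commute)
      also have "(- 1 / c e) * (- (c e * M i e)) = M i e" using ne by simp
      finally show "M i e = (\<Sum>s\<in>S. - c s / c e * M i s)" by simp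
    qed
    with assms(3) show False unfolding inspan_def by blast
  qed
  with h2 have "\<forall>i\<in>{1..k}. (\<Sum>s\<in>S. c s * M i s) = 0" by simp
  with assms(1) have "\<forall>s\<in>S. c s = 0" unfolding indep_def by blast
  with ce show "\<forall>s\<in>insert e S. c s = 0" by simp
qed

lemma basis_spans:
  assumes "indep M k S" "finite S" "card S = k" shows "inspan M k S e"
proof (rule ccontr)
  assume ns: "\<not> inspan M k S e"
  have eS: "e \<notin> S" using assms(2) ns inspan_mem by blast
  have "indep M k (insert e S)" using indep_insert[OF assms(1,2) ns] .
  from indep_card_le[OF this] have "card (insert e S) \<le> k" using assms(2) by simp
  with eS assms(2,3) show False by simp
qed


lemma sorted_interval: "sorted_list_of_set {1..(m::nat)} = [1..<Suc m]"
  by (metis atLeastLessThanSuc_atLeastAtMost sorted_list_of_set_range)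

lemma elt_interval: "i < m \<Longrightarrow> elt {1..m} i = Suc i"
  unfolding elt_def sorted_interval by (simp add: nth_upt del: upt_Suc)

lemma elt_interval': "i < m \<Longrightarrow> elt {Suc 0..m} i = Suc i"
  using elt_interval by simp

lemma elt_bij: "finite S \<Longrightarrow> bij_betw (elt S) {..<card S} S"
  unfolding elt_def[abs_def]
  by (rule bij_betw_nth) (auto simp: distinct_sorted_list_of_set)

lemma sum_elt: "finite S \<Longrightarrow> (\<Sum>j<card S. f (elt S j)) = (\<Sum>s\<in>S. f s)"
  using sum.reindex_bij_betw[OF elt_bij] by blast

lemma elt_in: "finite S \<Longrightarrow> j < card S \<Longrightarrow> elt S j \<in> S"
  using elt_bij bij_betwE by blast

lemma sum_shift1: "(\<Sum>i\<in>{1..k}. g i) = (\<Sum>i<k. g (Suc i)) " for g :: "nat \<Rightarrow> real"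
proof -
  have "{1..k} = Suc ` {..<k}" by (auto simp: image_iff) (metis Suc_pred' lessThan_iff less_Suc_eq_le not_less_eq_eq zero_less_iff_neq_zero)
  then show ?thesis by (simp add: sum.reindex)
qed

lemma mat_mult_vec_index:
  "v \<in> carrier_vec k \<Longrightarrow> i < k \<Longrightarrow> (mat k k f *\<^sub>v v) $ i = (\<Sum>j<k. f (i,j) * v $ j)"
  by (simp add: scalar_prod_def row_def lessThan_atLeast0)

lemma plucker_indep:
  assumes fS: "finite S"
  shows "plucker M S \<noteq> 0 \<longleftrightarrow> indep M (card S) S"
proof -
  define k where "k = card S"
  define A where "A = mat k k (\<lambda>(i,j). M (Suc i) (elt S j))"
  have pl: "plucker M S = det A"
    unfolding plucker_def minor_def A_def k_def
    by (rule arg_cong[where f=det], rule eq_matI) (auto simp: elt_interval')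
  have A: "A \<in> carrier_mat k k" by (simp add: A_def)
  show ?thesis
  proof
    assume d: "plucker M S \<noteq> 0"
    show "indep M (card S) S" unfolding indep_def
    proof (intro allI impI)
      fix c assume h: "\<forall>i\<in>{1..card S}. (\<Sum>s\<in>S. c s * M i s) = 0"
      define v where "v = vec k (\<lambda>j. c (elt S j))"
      have v: "v \<in> carrier_vec k" by (simp add: v_def)
      have "A *\<^sub>v v = 0\<^sub>v k"
      proof (rule eq_vecI)
        fix i assume "i < dim_vec (0\<^sub>v k :: real vec)"
        hence i: "i < k" by simp
        have "(A *\<^sub>v v) $ i = (\<Sum>j<k. (\<lambda>(i,j). M (Suc i) (elt S j)) (i,j) * v $ j)"
          unfolding A_def by (rule mat_mult_vec_index[OF v i])
        also have "\<dots> = (\<Sum>j<k. M (Suc i) (elt S j) * c (elt S j))"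
          by (intro sum.cong) (auto simp: v_def)
        also have "\<dots> = (\<Sum>s\<in>S. c s * M (Suc i) s)"
          using sum_elt[OF fS, of "\<lambda>s. M (Suc i) s * c s"] by (simp add: k_def mult.commute)
        also have "\<dots> = 0" using h i by (simp add: k_def)
        finally show "(A *\<^sub>v v) $ i = 0\<^sub>v k $ i" using i by simp
      qed (simp add: A_def)
      hence "v = 0\<^sub>v k" using det_0_iff_vec_prod_zero[OF A] d pl v by auto
      then have "\<forall>j<k. c (elt S j) = 0" by (metis index_vec index_zero_vec(1) v_def)
      then show "\<forall>s\<in>S. c s = 0"
        using elt_bij[OF fS] unfolding bij_betw_def k_def by (metis imageE lessThan_iff)
    qed
  next
    assume ind: "indep M (card S) S"
    show "plucker M S \<noteq> 0"
    proof
      assume "plucker M S = 0"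
      then obtain v where v: "v \<in> carrier_vec k" "v \<noteq> 0\<^sub>v k" "A *\<^sub>v v = 0\<^sub>v k"
        using det_0_iff_vec_prod_zero[OF A] pl by auto
      define c where "c = (\<lambda>s. v $ (inv_into {..<k} (elt S) s))"
      have ce: "c (elt S j) = v $ j" if "j < k" for j
        using that elt_bij[OF fS] unfolding c_def k_def bij_betw_def
        by (simp add: inv_into_f_f)
      have "\<forall>i\<in>{1..card S}. (\<Sum>s\<in>S. c s * M i s) = 0"
      proof
        fix i assume i: "i \<in> {1..card S}"
        then have i1: "i - 1 < k" by (auto simp: k_def)
        have "(\<Sum>s\<in>S. c s * M i s) = (\<Sum>j<k. c (elt S j) * M i (elt S j))"
          using sum_elt[OF fS, of "\<lambda>s. c s * M i s"] by (simp add: k_def)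
        also have "\<dots> = (\<Sum>j<k. M (Suc (i - 1)) (elt S j) * v $ j)"
          using i by (intro sum.cong) (auto simp: ce mult.commute)
        also have "\<dots> = (A *\<^sub>v v) $ (i - 1)"
          unfolding A_def using mat_mult_vec_index[OF v(1) i1] by simp
        also have "\<dots> = 0" using v(3) i1 by simp
        finally show "(\<Sum>s\<in>S. c s * M i s) = 0" .
      qed
      with ind have "\<forall>s\<in>S. c s = 0" unfolding indep_def by blast
      then have "\<forall>j<k. v $ j = 0" using ce elt_in[OF fS] by (metis k_def)
      then have "v = 0\<^sub>v k" using v(1) by (intro eq_vecI) auto
      with v(2) show False by simp
    qed
  qed
qed

lemma rank_full:
  assumes inv: "invertible_n n M" and kn: "k \<le> n" and fS: "finite S" and lt: "card S < k"
    and sp: "\<forall>e\<in>{1..n}. inspan M k S e"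
  shows False
proof -
  obtain y where y: "\<exists>i\<in>{1..k}. y i \<noteq> 0" "\<forall>s\<in>S. (\<Sum>i\<in>{1..k}. M i s * y i) = 0"
    using kernel_exists[OF fS, of "{1..k}" "\<lambda>s i. M i s"] lt by auto
  from sp obtain co where co: "\<forall>e\<in>{1..n}. rep M k S e (co e)" unfolding inspan_def by metis
  have z: "(\<Sum>i\<in>{1..k}. M i e * y i) = 0" if e: "e \<in> {1..n}" for e
  proof -
    have "(\<Sum>i\<in>{1..k}. M i e * y i) = (\<Sum>i\<in>{1..k}. (\<Sum>s\<in>S. co e s * M i s) * y i)"
      using co e unfolding rep_def by (intro sum.cong) auto
    also have "\<dots> = (\<Sum>i\<in>{1..k}. \<Sum>s\<in>S. co e s * (M i s * y i))"
      by (simp add: sum_distrib_right mult.assoc)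
    also have "\<dots> = (\<Sum>s\<in>S. \<Sum>i\<in>{1..k}. co e s * (M i s * y i))" by (rule sum.swap)
    also have "\<dots> = (\<Sum>s\<in>S. co e s * (\<Sum>i\<in>{1..k}. M i s * y i))"
      by (simp add: sum_distrib_left)
    also have "\<dots> = 0" using y(2) by simp
    finally show ?thesis .
  qed
  define A where "A = mat n n (\<lambda>(i,j). M (Suc i) (Suc j))"
  have A: "A \<in> carrier_mat n n" by (simp add: A_def)
  have "mat (card {1..n}) (card {1..n}) (\<lambda>(i,j). M (elt {1..n} i) (elt {1..n} j)) = A"
    unfolding A_def by (rule eq_matI) (auto simp: elt_interval')
  hence "det A \<noteq> 0" using inv unfolding invertible_n_def minor_def by simp
  hence dT: "det (transpose_mat A) \<noteq> 0" using det_transpose[OF A] by simp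
  define v where "v = vec n (\<lambda>i. if i < k then y (Suc i) else 0)"
  have v: "v \<in> carrier_vec n" by (simp add: v_def)
  have "transpose_mat A *\<^sub>v v = 0\<^sub>v n"
  proof (rule eq_vecI)
    fix j assume "j < dim_vec (0\<^sub>v n :: real vec)"
    hence j: "j < n" by simp
    have T: "transpose_mat A = mat n n (\<lambda>(i,j). M (Suc j) (Suc i))"
      by (rule eq_matI) (auto simp: A_def)
    have "(transpose_mat A *\<^sub>v v) $ j = (\<Sum>i<n. M (Suc i) (Suc j) * v $ i)"
      unfolding T using mat_mult_vec_index[OF v j] by simp
    also have "\<dots> = (\<Sum>i<n. if i < k then M (Suc i) (Suc j) * y (Suc i) else 0)"
      by (intro sum.cong) (auto simp: v_def)
    also have "\<dots> = (\<Sum>i\<in>{i \<in> {..<n}. i < k}. M (Suc i) (Suc j) * y (Suc i))"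
      by (rule sum.inter_filter[symmetric]) simp
    also have "{i \<in> {..<n}. i < k} = {..<k}" using kn by auto
    also have "(\<Sum>i<k. M (Suc i) (Suc j) * y (Suc i)) = (\<Sum>i\<in>{1..k}. M i (Suc j) * y i)"
      using sum_shift1[of "\<lambda>i. M i (Suc j) * y i"] by simp
    also have "\<dots> = 0" using z[of "Suc j"] j by simp
    finally show "(transpose_mat A *\<^sub>v v) $ j = 0\<^sub>v n $ j" using j by simp
  qed (simp add: A_def)
  moreover have "v \<noteq> 0\<^sub>v n"
  proof
    assume v0: "v = 0\<^sub>v n"
    from y(1) obtain i0 where i0: "i0 \<in> {1..k}" "y i0 \<noteq> 0" by blast
    have lt: "i0 - 1 < n" "i0 - 1 < k" "Suc (i0 - 1) = i0" using i0 kn by auto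
    have "v $ (i0 - 1) = y i0" unfolding v_def using lt index_vec[OF lt(1)] by simp
    moreover have "v $ (i0 - 1) = 0" using v0 lt(1) by simp
    ultimately show False using i0 by simp
  qed
  ultimately have "det (transpose_mat A) = 0"
    using det_0_iff_vec_prod_zero[of "transpose_mat A" n] A v by auto
  with dT show False by simp
qed


lemma lincomb_inspan:
  assumes "finite Z" "x0 \<in> Z" "c x0 \<noteq> 0" "\<forall>i\<in>{1..k}. (\<Sum>x\<in>Z. c x * M i x) = 0"
  shows "inspan M k (Z - {x0}) x0"
proof -
  have "rep M k (Z - {x0}) x0 (\<lambda>x. - c x / c x0)"
    unfolding rep_def
  proof
    fix i assume i: "i \<in> {1..k}"
    have h: "c x0 * M i x0 + (\<Sum>x\<in>Z - {x0}. c x * M i x) = 0"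
      using assms(4) i sum.remove[OF assms(1,2), of "\<lambda>x. c x * M i x"] by simp
    have "(\<Sum>x\<in>Z - {x0}. - c x / c x0 * M i x) = (- 1 / c x0) * (\<Sum>x\<in>Z - {x0}. c x * M i x)"
      by (simp add: sum_distrib_left)
    also have "(\<Sum>x\<in>Z - {x0}. c x * M i x) = - (c x0 * M i x0)" using h by (simp add: eq_neg_iff_add_eq_0 add.commute)
    also have "(- 1 / c x0) * (- (c x0 * M i x0)) = M i x0" using assms(3) by simp
    finally show "M i x0 = (\<Sum>x\<in>Z - {x0}. - c x / c x0 * M i x)" by simp
  qed
  then show ?thesis unfolding inspan_def by blast
qed

definition key :: "nat \<Rightarrow> nat \<Rightarrow> nat \<Rightarrow> nat" where
  "key n s e = (if e \<le> s then e else n + s + 1 - e)"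

definition pred :: "nat \<Rightarrow> nat \<Rightarrow> nat \<Rightarrow> nat set" where
  "pred n s e = {y\<in>{1..n}. key n s y < key n s e}"

definition G :: "rmat \<Rightarrow> nat \<Rightarrow> nat \<Rightarrow> nat \<Rightarrow> nat set" where
  "G M n k s = {e\<in>{1..n}. \<not> inspan M k (pred n s e) e}"

lemma key_inj: assumes "x \<le> n" "y \<le> n" "key n s x = key n s y" shows "x = y"
proof (cases "x \<le> s")
  case True
  then show ?thesis
  proof (cases "y \<le> s")
    case True
    then show ?thesis using assms \<open>x \<le> s\<close> unfolding key_def by simp
  next
    case False
    then show ?thesis using assms \<open>x \<le> s\<close> unfolding key_def by simp
  qed
next
  case False
  then show ?thesis
  proof (cases "y \<le> s")
    case True
    then show ?thesis using assms \<open>\<not> x \<le> s\<close> unfolding key_def by simp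
  next
    case False
    then show ?thesis using assms \<open>\<not> x \<le> s\<close> unfolding key_def by simp
  qed
qed

lemma key_inj_lt: "x \<in> {1..n} \<Longrightarrow> y \<in> {1..n} \<Longrightarrow> key n s x \<le> key n s y \<Longrightarrow> x \<noteq> y \<Longrightarrow> key n s x < key n s y"
  using key_inj[of x n y s] by (metis atLeastAtMost_iff le_neq_implies_less)

lemma finite_pred: "finite (pred n s e)" unfolding pred_def by simp

lemma G_sub: "G M n k s \<subseteq> {1..n}" unfolding G_def by auto

lemma finite_G: "finite (G M n k s)" by (rule finite_subset[OF G_sub]) simp

lemma G_indep: "indep M k (G M n k s)"
  unfolding indep_def
proof (intro allI impI, rule ccontr)
  fix c assume h: "\<forall>i\<in>{1..k}. (\<Sum>x\<in>G M n k s. c x * M i x) = 0"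
    and "\<not> (\<forall>x\<in>G M n k s. c x = 0)"
  define Z where "Z = {x \<in> G M n k s. c x \<noteq> 0}"
  have fZ: "finite Z" using finite_G Z_def by simp
  have Zne: "Z \<noteq> {}" using \<open>\<not> _\<close> Z_def by auto
  define m where "m = Max (key n s ` Z)"
  have "m \<in> key n s ` Z" using fZ Zne m_def by simp
  then obtain x0 where x0: "x0 \<in> Z" "key n s x0 = m" by blast
  have le: "\<forall>y\<in>Z. key n s y \<le> m" using fZ m_def by simp
  have sZ: "(\<Sum>x\<in>Z. c x * M i x) = (\<Sum>x\<in>G M n k s. c x * M i x)" for i
    unfolding Z_def by (rule sum.mono_neutral_left) (auto simp: finite_G)
  have "inspan M k (Z - {x0}) x0"
    by (rule lincomb_inspan[OF fZ x0(1)]) (use x0 Z_def h sZ in auto)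
  moreover have "Z - {x0} \<subseteq> pred n s x0"
  proof
    fix y assume y: "y \<in> Z - {x0}"
    have "y \<in> {1..n}" "x0 \<in> {1..n}" using y x0 G_sub[of M n k s] unfolding Z_def by auto
    then show "y \<in> pred n s x0" using key_inj_lt[of y n x0 s] le x0 y unfolding pred_def by auto
  qed
  ultimately have "inspan M k (pred n s x0) x0" using inspan_mono finite_pred by blast
  with x0(1) show False unfolding Z_def G_def by auto
qed

lemma G_span_le:
  assumes "e \<in> {1..n}"
  shows "inspan M k (G M n k s \<inter> {y. key n s y \<le> key n s e}) e"
  using assms
proof (induction "key n s e" arbitrary: e rule: less_induct)
  case less
  have fin: "finite (G M n k s \<inter> {y. key n s y \<le> key n s e})" using finite_G by simp
  show ?case
  proof (cases "e \<in> G M n k s")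
    case True
    then show ?thesis using inspan_mem[OF _ fin] by simp
  next
    case False
    with less.prems have sp: "inspan M k (pred n s e) e" unfolding G_def by auto
    have "\<forall>y\<in>pred n s e. inspan M k (G M n k s \<inter> {y. key n s y \<le> key n s e}) y"
    proof
      fix y assume y: "y \<in> pred n s e"
      then have "key n s y < key n s e" "y \<in> {1..n}" unfolding pred_def by auto
      then have "inspan M k (G M n k s \<inter> {z. key n s z \<le> key n s y}) y" using less.hyps by blast
      then show "inspan M k (G M n k s \<inter> {y. key n s y \<le> key n s e}) y"
        by (rule inspan_mono) (use \<open>key n s y < key n s e\<close> fin in auto)
    qed
    then show ?thesis using inspan_trans[OF fin finite_pred _ sp] by blast
  qed
qed

lemma G_span: "e \<in> {1..n} \<Longrightarrow> inspan M k (G M n k s) e"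
  by (rule inspan_mono[OF G_span_le[of e n M k s] _ finite_G]) auto

lemma G_nonG:
  assumes "e \<in> {1..n} - G M n k s"
  shows "inspan M k (G M n k s \<inter> pred n s e) e"
proof -
  have "G M n k s \<inter> {y. key n s y \<le> key n s e} = G M n k s \<inter> pred n s e"
  proof (intro equalityI subsetI)
    fix y assume y: "y \<in> G M n k s \<inter> {y. key n s y \<le> key n s e}"
    then have "y \<in> {1..n}" "y \<noteq> e" using G_sub[of M n k s] assms by auto
    then show "y \<in> G M n k s \<inter> pred n s e" using key_inj_lt[of y n e s] y assms unfolding pred_def by auto
  qed (auto simp: pred_def)
  then show ?thesis using G_span_le[of e n M k s] assms by simp
qed

lemma G_card:
  assumes "invertible_n n M" "k \<le> n"
  shows "card (G M n k s) = k"
proof -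
  have "card (G M n k s) \<le> k" using indep_card_le[OF G_indep finite_G] .
  moreover have "\<not> card (G M n k s) < k"
  proof
    assume "card (G M n k s) < k"
    from rank_full[OF assms finite_G this] show False using G_span[of _ n M k s] by blast
  qed
  ultimately show ?thesis by simp
qed

lemma GC:
  assumes J: "J \<subseteq> {1..n}" "indep M k J" "card J = k"
    and gc: "\<forall>e\<in>{1..n} - J. inspan M k (J \<inter> pred n s e) e"
  shows "J = G M n k s"
proof -
  have fJ: "finite J" by (rule finite_subset[OF J(1)]) simp
  have "J \<subseteq> G M n k s"
  proof
    fix e assume e: "e \<in> J"
    show "e \<in> G M n k s"
    proof (rule ccontr)
      assume "e \<notin> G M n k s"
      with e J(1) have sp: "inspan M k (pred n s e) e" unfolding G_def by auto
      have fin: "finite (J \<inter> pred n s e)" using fJ by simp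
      have "\<forall>y\<in>pred n s e. inspan M k (J \<inter> pred n s e) y"
      proof
        fix y assume y: "y \<in> pred n s e"
        show "inspan M k (J \<inter> pred n s e) y"
        proof (cases "y \<in> J")
          case True then show ?thesis using y inspan_mem[OF _ fin] by simp
        next
          case False
          have "y \<in> {1..n} - J" using y False unfolding pred_def by simp
          then have "inspan M k (J \<inter> pred n s y) y" using gc by blast
          moreover have "J \<inter> pred n s y \<subseteq> J \<inter> pred n s e"
            using y unfolding pred_def by auto
          ultimately show ?thesis using inspan_mono[OF _ _ fin] by blast
        qed
      qed
      then have "inspan M k (J \<inter> pred n s e) e" using inspan_trans[OF fin finite_pred _ sp] by blast
      moreover have "J \<inter> pred n s e \<subseteq> J - {e}" unfolding pred_def by auto
      ultimately have "inspan M k (J - {e}) e" using inspan_mono[OF _ _ finite_Diff[OF fJ]] by blast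
      with indep_not_inspan[OF J(2) e fJ] show False by simp
    qed
  qed
  moreover have "card (G M n k s) \<le> k" using indep_card_le[OF G_indep finite_G] .
  moreover have "card J \<le> card (G M n k s)" using card_mono[OF finite_G \<open>J \<subseteq> G M n k s\<close>] .
  ultimately have "card (G M n k s) = card J" using J(3) by linarith
  then show ?thesis using card_subset_eq[OF finite_G \<open>J \<subseteq> G M n k s\<close>] by simp
qed

lemma inspan_Suc: "inspan M (Suc k) S e \<Longrightarrow> inspan M k S e"
  unfolding inspan_def rep_def by auto

lemma G_mono: "G M n k s \<subseteq> G M n (Suc k) s"
proof
  fix e assume "e \<in> G M n k s"
  then show "e \<in> G M n (Suc k) s" using inspan_Suc[of M k "pred n s e" e] unfolding G_def by blast
qed


lemma rep_unique:
  assumes "indep M k I" "finite I" "rep M k I e c" "rep M k I e d" "x \<in> I"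
  shows "c x = d x"
proof -
  have "\<forall>i\<in>{1..k}. (\<Sum>s\<in>I. (c s - d s) * M i s) = 0"
    using assms(3,4) unfolding rep_def by (simp add: algebra_simps sum_subtractf)
  then have "\<forall>s\<in>I. c s - d s = 0" using spec[OF assms(1)[unfolded indep_def], of "\<lambda>s. c s - d s"] by simp
  then show ?thesis using assms(5) by simp
qed

lemma rep_to_inspan:
  assumes "finite I" "S \<subseteq> I" "rep M k I e c" "\<forall>x\<in>I - S. c x = 0"
  shows "inspan M k S e"
proof -
  have "(\<Sum>x\<in>S. c x * M i x) = (\<Sum>x\<in>I. c x * M i x)" for i
    by (rule sum.mono_neutral_left) (use assms in auto)
  then have "rep M k S e c" using assms(3) unfolding rep_def by simp
  then show ?thesis unfolding inspan_def by blast
qed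

lemma inspan_sub_iff:
  assumes "indep M k I" "finite I" "S \<subseteq> I" "rep M k I e c"
  shows "inspan M k S e \<longleftrightarrow> (\<forall>x\<in>I - S. c x = 0)"
proof
  assume "inspan M k S e"
  then obtain d where d: "rep M k S e d" unfolding inspan_def by blast
  have d': "rep M k I e (\<lambda>x. if x \<in> S then d x else 0)" by (rule rep_zero_ext[OF d assms(3,2)])
  show "\<forall>x\<in>I - S. c x = 0"
  proof
    fix x assume x: "x \<in> I - S"
    have "c x = (if x \<in> S then d x else 0)" using rep_unique[OF assms(1,2,4) d'] x by blast
    then show "c x = 0" using x by simp
  qed
next
  assume "\<forall>x\<in>I - S. c x = 0"
  then show "inspan M k S e" using rep_to_inspan[OF assms(2,3,4)] by blast
qed

lemma exchange:
  assumes ind: "indep M k I" and fI: "finite I" and cI: "card I = k"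
    and i: "i \<in> I" and j: "j \<notin> I" and c: "rep M k I j c"
  shows "plucker M ((I - {i}) \<union> {j}) \<noteq> 0 \<longleftrightarrow> c i \<noteq> 0"
proof -
  define S where "S = insert j (I - {i})"
  have eqS: "(I - {i}) \<union> {j} = S" unfolding S_def by auto
  have fS: "finite S" using fI S_def by simp
  have "card I \<noteq> 0" using i fI by auto
  then have cS: "card S = k" using fI i j cI unfolding S_def by (simp add: card_Diff_singleton)
  have "plucker M S \<noteq> 0 \<longleftrightarrow> indep M k S" using plucker_indep[OF fS] cS by simp
  also have "\<dots> \<longleftrightarrow> \<not> inspan M k (I - {i}) j"
  proof
    assume h: "indep M k S"
    have "S - {j} = I - {i}" using j unfolding S_def by auto
    moreover have "j \<in> S" unfolding S_def by simp
    ultimately show "\<not> inspan M k (I - {i}) j" using indep_not_inspan[OF h _ fS] by metis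
  next
    assume h: "\<not> inspan M k (I - {i}) j"
    have "indep M k (I - {i})" by (rule indep_subset[OF ind _ fI]) auto
    from indep_insert[OF this _ h] show "indep M k S" unfolding S_def using fI by simp
  qed
  also have "\<dots> \<longleftrightarrow> c i \<noteq> 0"
  proof -
    have "I - (I - {i}) = {i}" using i by auto
    then show ?thesis using inspan_sub_iff[OF ind fI _ c, of "I - {i}"] by auto
  qed
  finally show ?thesis using eqS by simp
qed

lemma key_arith1:
  assumes "x \<le> n" "e \<le> n" "x \<noteq> e" "key n t x < key n t e" "x < e \<longrightarrow> x \<le> \<beta>" "\<beta> \<le> s" "s \<le> t"
  shows "key n s x < key n s e"
  using assms unfolding key_def by (cases "x \<le> t"; cases "e \<le> t"; cases "x \<le> s"; cases "e \<le> s"; simp; linarith)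

lemma key_arith2:
  assumes "b \<le> n" "j \<le> n" "b < j" "key n t b < key n t j" shows "b \<le> t"
  using assms unfolding key_def by (cases "b \<le> t"; cases "j \<le> t"; simp; linarith)

lemma key_arith3:
  assumes "y \<le> n" "1 \<le> b" "b \<le> n" "y \<noteq> b" shows "key n (b - 1) y < key n (b - 1) b"
  using assms unfolding key_def by (cases "y \<le> b - 1"; simp; linarith)

lemma key_arith4:
  assumes "1 \<le> b" "b < e" "e \<le> n" "x \<le> n" "x < b \<or> e < x" shows "key n (b - 1) x < key n (b - 1) e"
  using assms unfolding key_def by (cases "x \<le> b - 1"; simp; linarith)

lemma key_arith6:
  assumes "x \<le> n" "e \<le> t" "key n t x < key n t e" shows "x < e"
  using assms unfolding key_def by (cases "x \<le> t"; simp; linarith)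

lemma step:
  assumes inv: "invertible_n n M" and kn: "k \<le> n" and tn: "t \<le> n"
  shows "(Xi n (plucker M) (G M n k t) = G M n k t \<and> (\<forall>s\<le>t. G M n k s = G M n k t)) \<or>
         (\<exists>t'<t. Xi n (plucker M) (G M n k t) = G M n k t' \<and>
            (\<forall>s. t' < s \<and> s \<le> t \<longrightarrow> G M n k s = G M n k t))"
proof -
  define I where "I = G M n k t"
  define P where "P = plucker M"
  have Isub: "I \<subseteq> {1..n}" unfolding I_def by (rule G_sub)
  have fI: "finite I" unfolding I_def by (rule finite_G)
  have indI: "indep M k I" unfolding I_def by (rule G_indep)
  have cI: "card I = k" unfolding I_def by (rule G_card[OF inv kn])
  have PI: "P I \<noteq> 0" unfolding P_def using plucker_indep[OF fI] indI cI by simp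
  have "\<forall>e\<in>{1..n}. \<exists>c. rep M k I e c" using basis_spans[OF indI fI cI] unfolding inspan_def by blast
  then obtain co where co: "\<forall>e\<in>{1..n}. rep M k I e (co e)" by metis
  have gcI: "key n t x < key n t e" if "e \<in> {1..n} - I" "x \<in> I" "co e x \<noteq> 0" for e x
  proof -
    have r: "rep M k I e (co e)" using co that(1) by simp
    have "inspan M k (I \<inter> pred n t e) e" using G_nonG[of e n M k t] that(1) unfolding I_def by simp
    then have "\<forall>x\<in>I - (I \<inter> pred n t e). co e x = 0"
      using inspan_sub_iff[OF indI fI Int_lower1 r] by simp
    then have "x \<in> pred n t e" using that by auto
    then show ?thesis unfolding pred_def by simp
  qed
  have exch: "P ((I - {i}) \<union> {j}) \<noteq> 0 \<longleftrightarrow> co j i \<noteq> 0" if "i \<in> I" "j \<in> {1..n} - I" for i j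
  proof -
    have r: "rep M k I j (co j)" using co that(2) by simp
    have "j \<notin> I" using that(2) by simp
    from exchange[OF indI fI cI that(1) this r] show ?thesis unfolding P_def .
  qed
  define B where "B = {i \<in> I. \<exists>j\<in>{1..n} - I. i < j \<and> P ((I - {i}) \<union> {j}) \<noteq> 0}"
  have Bc: "B = {i \<in> I. \<exists>j\<in>{1..n} - I. i < j \<and> co j i \<noteq> 0}" unfolding B_def using exch by auto
  have mov: "x \<in> B" if "e \<in> {1..n} - I" "x \<in> I" "co e x \<noteq> 0" "x < e" for e x
    using that Bc by auto
  have fB: "finite B" using fI B_def by simp
  have stable: "G M n k s = I" if bnd: "\<forall>x\<in>B. x \<le> \<beta>" and bs: "\<beta> \<le> s" and st: "s \<le> t" for \<beta> s
  proof -
    have "I = G M n k s"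
    proof (rule GC[OF Isub indI cI], rule ballI)
      fix e assume e: "e \<in> {1..n} - I"
      have r: "rep M k I e (co e)" using co e by simp
      show "inspan M k (I \<inter> pred n s e) e"
      proof (rule rep_to_inspan[OF fI Int_lower1 r], rule ballI, rule ccontr)
        fix x assume x: "x \<in> I - I \<inter> pred n s e" and nz: "co e x \<noteq> 0"
        have xn: "x \<in> {1..n}" using x Isub by auto
        have xI: "x \<in> I" using x by simp
        have "key n t x < key n t e" using gcI[OF e xI nz] .
        moreover have "x < e \<longrightarrow> x \<le> \<beta>" using mov[OF e xI nz] bnd by auto
        moreover have "x \<noteq> e" using x e by auto
        ultimately have "key n s x < key n s e" using key_arith1[of x n e t \<beta> s] xn e bs st by auto
        then have "x \<in> pred n s e" using xn unfolding pred_def by simp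
        with x show False by simp
      qed
    qed
    then show ?thesis by simp
  qed
  have goal: "(Xi n P I = I \<and> (\<forall>s\<le>t. G M n k s = I)) \<or>
         (\<exists>t'<t. Xi n P I = G M n k t' \<and> (\<forall>s. t' < s \<and> s \<le> t \<longrightarrow> G M n k s = I))"
  proof (cases "B = {}")
    case True
    have "Xi n P I = I" unfolding Xi_def Let_def B_def[symmetric] using True by simp
    moreover have "\<forall>s\<le>t. G M n k s = I" using stable[of 0] True by auto
    ultimately show ?thesis by simp
  next
    case False
    define b where "b = Max B"
    have bB: "b \<in> B" using False fB b_def by simp
    have bmax: "\<forall>x\<in>B. x \<le> b" using fB b_def by simp
    obtain j0 where j0: "j0 \<in> {1..n} - I" "b < j0" "co j0 b \<noteq> 0" using bB Bc by auto
    have bI: "b \<in> I" using bB B_def by simp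
    have b1: "1 \<le> b" "b \<le> n" using bI Isub by auto
    have bt: "b \<le> t" using key_arith2[of b n j0 t] gcI[OF j0(1) bI j0(3)] b1 j0 by auto
    define A where "A = {j \<in> {1..n} - I. P ((I - {b}) \<union> {j}) \<noteq> 0}"
    have Ac: "A = {j \<in> {1..n} - I. co j b \<noteq> 0}" unfolding A_def using exch[OF bI] by auto
    define a where "a = Max A"
    have fA: "finite A" unfolding A_def by simp
    have j0A: "j0 \<in> A" using Ac j0 by simp
    have aA: "a \<in> A" unfolding a_def by (rule Max_in[OF fA]) (use j0A in auto)
    have amax: "\<forall>j\<in>{1..n} - I. co j b \<noteq> 0 \<longrightarrow> j \<le> a" using Ac fA a_def by auto
    have a: "a \<in> {1..n} - I" "co a b \<noteq> 0" using aA Ac by auto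
    have ab: "b < a" using amax j0 by force
    define I' where "I' = (I - {b}) \<union> {a}"
    have XiI: "Xi n P I = I'"
      unfolding Xi_def Let_def B_def[symmetric] b_def[symmetric] A_def[symmetric] a_def[symmetric] I'_def
      using PI False by simp
    have I'sub: "I' \<subseteq> {1..n}" using Isub a unfolding I'_def by auto
    have I'ins: "I' = insert a (I - {b})" unfolding I'_def by auto
    have fI': "finite I'" using fI I'ins by simp
    have "card I \<noteq> 0" using bI fI by auto
    then have cI': "card I' = k" using I'ins a(1) bI fI cI by (simp add: card_Diff_singleton)
    have PI': "P I' \<noteq> 0" using exch[OF bI a(1)] a(2) I'_def by simp
    have indI': "indep M k I'" using plucker_indep[OF fI'] PI' cI' P_def by simp
    have "I' = G M n k (b - 1)"
    proof (rule GC[OF I'sub indI' cI'], rule ballI)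
      fix e assume e: "e \<in> {1..n} - I'"
      show "inspan M k (I' \<inter> pred n (b - 1) e) e"
      proof (cases "e = b")
        case True
        have "I' \<subseteq> pred n (b - 1) b"
        proof
          fix x assume x: "x \<in> I'"
          then have "x \<in> {1..n}" "x \<noteq> b" using I'sub e True by auto
          then show "x \<in> pred n (b - 1) b" unfolding pred_def using key_arith3[of x n b] b1 True by auto
        qed
        then have "I' \<inter> pred n (b - 1) e = I'" using True by auto
        then show ?thesis using basis_spans[OF indI' fI' cI'] by simp
      next
        case eb: False
        have eI: "e \<notin> I" using e eb I'_def by auto
        have ea: "e \<noteq> a" using e I'_def by auto
        have en: "e \<in> {1..n}" using e by simp
        have eI2: "e \<in> {1..n} - I" using en eI by simp
        define r where "r = co e b / co a b"
        have rab: "r * co a b = co e b" using a(2) by (simp add: r_def)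
        define d where "d = (\<lambda>x. if x = a then r else co e x - r * co a x)"
        have rep': "rep M k I' e d"
          unfolding rep_def
        proof
          fix i assume i: "i \<in> {1..k}"
          have ra: "M i a = co a b * M i b + (\<Sum>x\<in>I - {b}. co a x * M i x)"
            using co a(1) i sum.remove[OF fI bI, of "\<lambda>x. co a x * M i x"] unfolding rep_def by auto
          have re: "M i e = co e b * M i b + (\<Sum>x\<in>I - {b}. co e x * M i x)"
            using co en i sum.remove[OF fI bI, of "\<lambda>x. co e x * M i x"] unfolding rep_def by auto
          have s1: "(\<Sum>x\<in>I'. d x * M i x) = d a * M i a + (\<Sum>x\<in>I - {b}. d x * M i x)"
            using I'ins fI a(1) by simp
          have s2: "(\<Sum>x\<in>I - {b}. d x * M i x) = (\<Sum>x\<in>I - {b}. co e x * M i x - r * (co a x * M i x))"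
            by (rule sum.cong) (use a(1) in \<open>auto simp: d_def algebra_simps\<close>)
          have s3: "(\<Sum>x\<in>I - {b}. co e x * M i x - r * (co a x * M i x)) =
               (\<Sum>x\<in>I - {b}. co e x * M i x) - r * (\<Sum>x\<in>I - {b}. co a x * M i x)"
            by (simp add: sum_subtractf sum_distrib_left)
          have "(\<Sum>x\<in>I'. d x * M i x) = r * M i a + (\<Sum>x\<in>I - {b}. co e x * M i x) - r * (\<Sum>x\<in>I - {b}. co a x * M i x)"
            using s1 s2 s3 by (simp add: d_def)
          also have "\<dots> = r * co a b * M i b + (\<Sum>x\<in>I - {b}. co e x * M i x)"
            using ra by (simp add: algebra_simps)
          also have "\<dots> = M i e" using re rab by simp
          finally show "M i e = (\<Sum>x\<in>I'. d x * M i x)" by simp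
        qed
        show ?thesis
        proof (rule rep_to_inspan[OF fI' Int_lower1 rep'], rule ballI, rule ccontr)
          fix x assume x: "x \<in> I' - I' \<inter> pred n (b - 1) e" and nz: "d x \<noteq> 0"
          have xn: "x \<in> {1..n}" using x I'sub by auto
          have "key n (b - 1) x < key n (b - 1) e"
          proof (cases "e < b")
            case True
            have e_t: "e \<le> t" using True bt by simp
            have cb: "co e b = 0"
            proof (rule ccontr)
              assume "co e b \<noteq> 0"
              from gcI[OF eI2 bI this] have "b < e" using key_arith6[of b n e t] b1 e_t by simp
              with True show False by simp
            qed
            hence "r = 0" by (simp add: r_def)
            hence xa: "x \<noteq> a" "co e x \<noteq> 0" using nz by (auto simp: d_def split: if_splits)
            hence "x \<in> I" using x I'_def by auto
            from gcI[OF eI2 this xa(2)] have "x < e" using key_arith6[of x n e t] xn e_t by simp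
            then show ?thesis using True unfolding key_def by simp
          next
            case False
            hence be: "b < e" using eb by simp
            have supp: "y < b \<or> j < y" if "j \<in> {1..n} - I" "b < j" "y \<in> I - {b}" "co j y \<noteq> 0" for j y
            proof -
              have "y \<noteq> j" using that by auto
              moreover have "y < j \<longrightarrow> y \<le> b" using mov[OF that(1) _ that(4)] that(3) bmax by auto
              ultimately show ?thesis using that(3) by auto
            qed
            have "x < b \<or> e < x"
            proof (cases "x = a")
              case True
              then have "co e b \<noteq> 0" using nz by (simp add: d_def r_def)
              then have "e \<le> a" using amax eI2 by auto
              then show ?thesis using True ea by auto
            next
              case xa: False
              have xIb: "x \<in> I - {b}" using x xa I'_def by auto
              have "co e x \<noteq> 0 \<or> (r \<noteq> 0 \<and> co a x \<noteq> 0)" using nz xa by (auto simp: d_def)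
              then show ?thesis
              proof
                assume "co e x \<noteq> 0" then show ?thesis using supp[OF eI2 be xIb] by simp
              next
                assume h: "r \<noteq> 0 \<and> co a x \<noteq> 0"
                then have "co e b \<noteq> 0" by (simp add: r_def)
                then have "e \<le> a" using amax eI2 by auto
                with ea have "e < a" by simp
                have "x < b \<or> a < x" using supp[OF a(1) ab xIb] h by simp
                then show ?thesis using \<open>e < a\<close> by auto
              qed
            qed
            then show ?thesis using key_arith4[of b e n x] b1 be en xn by auto
          qed
          then have "x \<in> pred n (b - 1) e" using xn unfolding pred_def by simp
          with x show False by simp
        qed
      qed
    qed
    moreover have "b - 1 < t" using b1 bt by simp
    moreover have "\<forall>s. b - 1 < s \<and> s \<le> t \<longrightarrow> G M n k s = I" using stable[OF bmax] by auto
    ultimately show ?thesis using XiI by auto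
  qed
  then show ?thesis unfolding I_def P_def .
qed


lemma orbit1:
  assumes inv: "invertible_n n M" and kn: "k \<le> n"
  shows "\<exists>t\<le>n. (Xi n (plucker M) ^^ m) (G M n k n) = G M n k t"
proof (induction m)
  case 0
  then show ?case by auto
next
  case (Suc m)
  then obtain t where t: "t \<le> n" "(Xi n (plucker M) ^^ m) (G M n k n) = G M n k t" by blast
  have "\<exists>t'. t' \<le> t \<and> Xi n (plucker M) (G M n k t) = G M n k t'"
    using step[OF inv kn t(1)]
  proof
    assume "Xi n (plucker M) (G M n k t) = G M n k t \<and> (\<forall>s\<le>t. G M n k s = G M n k t)"
    then show ?thesis by blast
  next
    assume "\<exists>t'<t. Xi n (plucker M) (G M n k t) = G M n k t' \<and>
            (\<forall>s. t' < s \<and> s \<le> t \<longrightarrow> G M n k s = G M n k t)"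
    then show ?thesis using less_imp_le by blast
  qed
  then obtain t' where "t' \<le> t" "Xi n (plucker M) (G M n k t) = G M n k t'" by blast
  then show ?case using t by (intro exI[of _ t']) auto
qed

lemma orbit2:
  assumes inv: "invertible_n n M" and kn: "k \<le> n"
  shows "t \<le> n \<Longrightarrow> s \<le> t \<Longrightarrow> \<exists>m. G M n k s = (Xi n (plucker M) ^^ m) (G M n k t)"
proof (induction t arbitrary: s rule: less_induct)
  case (less t)
  from step[OF inv kn less.prems(1)] show ?case
  proof
    assume "Xi n (plucker M) (G M n k t) = G M n k t \<and> (\<forall>s\<le>t. G M n k s = G M n k t)"
    then have "G M n k s = G M n k t" using less.prems(2) by blast
    then show ?thesis by (intro exI[of _ 0]) simp
  next
    assume "\<exists>t'<t. Xi n (plucker M) (G M n k t) = G M n k t' \<and>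
            (\<forall>s. t' < s \<and> s \<le> t \<longrightarrow> G M n k s = G M n k t)"
    then obtain t' where t': "t' < t" "Xi n (plucker M) (G M n k t) = G M n k t'"
      "\<forall>s. t' < s \<and> s \<le> t \<longrightarrow> G M n k s = G M n k t" by blast
    show ?thesis
    proof (cases "t' < s")
      case True
      then have "G M n k s = G M n k t" using t'(3) less.prems(2) by blast
      then show ?thesis by (intro exI[of _ 0]) simp
    next
      case False
      then have "s \<le> t'" by simp
      from less.IH[OF t'(1) _ this] less.prems t'(1) obtain m where
        "G M n k s = (Xi n (plucker M) ^^ m) (G M n k t')" by auto
      also have "\<dots> = (Xi n (plucker M) ^^ m) (Xi n (plucker M) (G M n k t))" using t'(2) by simp
      also have "\<dots> = (Xi n (plucker M) ^^ Suc m) (G M n k t)" by (simp only: funpow_Suc_right o_apply)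
      finally show ?thesis by blast
    qed
  qed
qed

lemma elt_strict: "finite X \<Longrightarrow> i < j \<Longrightarrow> j < card X \<Longrightarrow> elt X i < elt X j"
  unfolding elt_def
  using sorted_wrt_nth_less[OF strict_sorted_list_of_set[of X]] by simp

lemma elt_mono: "finite X \<Longrightarrow> i \<le> j \<Longrightarrow> j < card X \<Longrightarrow> elt X i \<le> elt X j"
  using elt_strict[of X i j] by (cases "i = j") auto

lemma gale_count:
  assumes fX: "finite X" and fY: "finite Y" and c: "card X = card Y"
    and cnt: "\<forall>t. card (Y \<inter> {..t}) \<le> card (X \<inter> {..t})"
  shows "gale_le X Y"
  unfolding gale_le_def
proof (intro conjI allI impI)
  show "card X = card Y" by fact
  fix i assume i: "i < card X"
  show "elt X i \<le> elt Y i"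
  proof (rule ccontr)
    assume "\<not> elt X i \<le> elt Y i"
    hence lt: "elt Y i < elt X i" by simp
    define t where "t = elt Y i"
    have "elt Y ` {..i} \<subseteq> Y \<inter> {..t}"
    proof
      fix y assume "y \<in> elt Y ` {..i}"
      then obtain j where j: "j \<le> i" "y = elt Y j" by auto
      have "j < card Y" using j i c by simp
      then show "y \<in> Y \<inter> {..t}" using j elt_in[OF fY] elt_mono[OF fY j(1)] i c t_def by auto
    qed
    moreover have "inj_on (elt Y) {..i}"
    proof -
      have "inj_on (elt Y) {..<card Y}" using elt_bij[OF fY] unfolding bij_betw_def by simp
      moreover have "{..i} \<subseteq> {..<card Y}" using i c by auto
      ultimately show ?thesis by (rule inj_on_subset)
    qed
    ultimately have c1: "Suc i \<le> card (Y \<inter> {..t})"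
    proof -
      assume sub: "elt Y ` {..i} \<subseteq> Y \<inter> {..t}" and inj: "inj_on (elt Y) {..i}"
      have "card (elt Y ` {..i}) = Suc i" using card_image[OF inj] by simp
      moreover have "card (elt Y ` {..i}) \<le> card (Y \<inter> {..t})"
        by (rule card_mono[OF _ sub]) (simp add: fY)
      ultimately show ?thesis by simp
    qed
    have "X \<inter> {..t} \<subseteq> elt X ` {..<i}"
    proof
      fix x assume x: "x \<in> X \<inter> {..t}"
      then obtain j where j: "j < card X" "x = elt X j"
        using elt_bij[OF fX] unfolding bij_betw_def by (metis IntD1 imageE lessThan_iff)
      have "j < i"
      proof (rule ccontr)
        assume "\<not> j < i"
        then have "elt X i \<le> elt X j" using elt_mono[OF fX _ j(1)] by simp
        then show False using x j lt t_def by simp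
      qed
      then show "x \<in> elt X ` {..<i}" using j by auto
    qed
    then have "card (X \<inter> {..t}) \<le> card (elt X ` {..<i})"
      by (rule card_mono[rotated]) simp
    also have "\<dots> \<le> card {..<i}" by (rule card_image_le) simp
    finally have "card (X \<inter> {..t}) \<le> i" by simp
    moreover have "card (Y \<inter> {..t}) \<le> card (X \<inter> {..t})" using cnt by blast
    ultimately show False using c1 by linarith
  qed
qed

lemma gale_antisym:
  assumes fX: "finite X" and fY: "finite Y" and "gale_le X Y" "gale_le Y X"
  shows "X = Y"
proof -
  have c: "card X = card Y" using assms(3) unfolding gale_le_def by simp
  have "\<forall>i<card X. elt X i = elt Y i"
  proof (intro allI impI)
    fix i assume i: "i < card X"
    have "elt X i \<le> elt Y i" using assms(3) i unfolding gale_le_def by blast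
    moreover have "elt Y i \<le> elt X i" using assms(4) i c unfolding gale_le_def by (metis)
    ultimately show "elt X i = elt Y i" by simp
  qed
  then have h: "\<forall>i<card X. sorted_list_of_set X ! i = sorted_list_of_set Y ! i" unfolding elt_def .
  have "sorted_list_of_set X = sorted_list_of_set Y"
  proof (rule nth_equalityI)
    show "length (sorted_list_of_set X) = length (sorted_list_of_set Y)" using c by simp
    fix i assume "i < length (sorted_list_of_set X)"
    then have "i < card X" by simp
    then show "sorted_list_of_set X ! i = sorted_list_of_set Y ! i" using h by blast
  qed
  then show ?thesis by (metis set_sorted_list_of_set[OF fX] set_sorted_list_of_set[OF fY])
qed

lemma key_nn: "y \<le> n \<Longrightarrow> key n n y = y" unfolding key_def by simp

lemma G_gale_min:
  assumes inv: "invertible_n n M" and kn: "k \<le> n" and J: "J \<subseteq> {1..n}" "card J = k" "plucker M J \<noteq> 0"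
  shows "gale_le (G M n k n) J"
proof -
  have fJ: "finite J" by (rule finite_subset[OF J(1)]) simp
  have indJ: "indep M k J" using plucker_indep[OF fJ] J by simp
  show ?thesis
  proof (rule gale_count[OF finite_G fJ])
    show "card (G M n k n) = card J" using G_card[OF inv kn] J by simp
    show "\<forall>t. card (J \<inter> {..t}) \<le> card (G M n k n \<inter> {..t})"
    proof
      fix t
      have fB: "finite (G M n k n \<inter> {..t})" using finite_G by simp
      have "indep M k (J \<inter> {..t})" by (rule indep_subset[OF indJ _ fJ]) auto
      moreover have "\<forall>a\<in>J \<inter> {..t}. inspan M k (G M n k n \<inter> {..t}) a"
      proof
        fix a assume a: "a \<in> J \<inter> {..t}"
        then have an: "a \<in> {1..n}" using J(1) by auto
        have "inspan M k (G M n k n \<inter> {y. key n n y \<le> key n n a}) a" using G_span_le[OF an] .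
        moreover have "G M n k n \<inter> {y. key n n y \<le> key n n a} \<subseteq> G M n k n \<inter> {..t}"
        proof
          fix y assume y: "y \<in> G M n k n \<inter> {y. key n n y \<le> key n n a}"
          then have "y \<le> n" using G_sub[of M n k n] by auto
          then show "y \<in> G M n k n \<inter> {..t}" using y a an key_nn[of y n] key_nn[of a n] by auto
        qed
        ultimately show "inspan M k (G M n k n \<inter> {..t}) a" using inspan_mono[OF _ _ fB] by blast
      qed
      ultimately show "card (J \<inter> {..t}) \<le> card (G M n k n \<inter> {..t})"
        using steinitz[OF _ _ fB] fJ by simp
    qed
  qed
qed

lemma gale_min_eq:
  assumes inv: "invertible_n n M" and kn: "k \<le> n"
  shows "gale_min n (plucker M) k = G M n k n"
  unfolding gale_min_def
proof (rule the_equality)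
  have c: "card (G M n k n) = k" using G_card[OF inv kn] .
  show "G M n k n \<subseteq> {1..n} \<and> card (G M n k n) = k \<and> plucker M (G M n k n) \<noteq> 0 \<and>
    (\<forall>J. J \<subseteq> {1..n} \<and> card J = k \<and> plucker M J \<noteq> 0 \<longrightarrow> gale_le (G M n k n) J)"
    using G_sub c plucker_indep[OF finite_G] G_indep G_gale_min[OF inv kn] by auto
next
  fix I assume h: "I \<subseteq> {1..n} \<and> card I = k \<and> plucker M I \<noteq> 0 \<and>
    (\<forall>J. J \<subseteq> {1..n} \<and> card J = k \<and> plucker M J \<noteq> 0 \<longrightarrow> gale_le I J)"
  have c: "card (G M n k n) = k" using G_card[OF inv kn] .
  have "plucker M (G M n k n) \<noteq> 0" using c plucker_indep[OF finite_G] G_indep by auto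
  then have g1: "gale_le I (G M n k n)" using h G_sub c by auto
  have g2: "gale_le (G M n k n) I" using G_gale_min[OF inv kn] h by auto
  have fI: "finite I" by (rule finite_subset[of I "{1..n}"]) (use h in auto)
  show "I = G M n k n" using gale_antisym[OF fI finite_G g1 g2] .
qed

theorem mainTheorem7:
  fixes n :: nat and M :: rmat and I :: "nat set"
  assumes "tnn_flag_rep n M"
    and "I \<in> extremal_indices n M"
  shows "\<exists>R :: nat \<Rightarrow> nat set.
           (\<forall>i\<in>{1..n-1}. R i \<in> extremal_indices n M \<and> card (R i) = i) \<and>
           (\<forall>i. 1 \<le> i \<and> i < n - 1 \<longrightarrow> R i \<subset> R (Suc i)) \<and>
           (\<exists>i\<in>{1..n-1}. I = R i)"
proof -
  have inv: "invertible_n n M" using assms(1) unfolding tnn_flag_rep_def by simp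
  obtain m k where mk: "k \<in> {1..n-1}" "I = (Xi n (plucker M) ^^ m) (gale_min n (plucker M) k)"
    using assms(2) unfolding extremal_indices_def by blast
  have kn: "k \<le> n" using mk(1) by (metis atLeastAtMost_iff diff_le_self le_trans)
  obtain t where t: "t \<le> n" "I = G M n k t"
    using orbit1[OF inv kn, of m] mk(2) gale_min_eq[OF inv kn] by auto
  define R where "R = (\<lambda>i. G M n i t)"
  have "\<forall>i\<in>{1..n-1}. R i \<in> extremal_indices n M \<and> card (R i) = i"
  proof
    fix i assume i: "i \<in> {1..n-1}"
    then have iN: "i \<le> n" by (metis atLeastAtMost_iff diff_le_self le_trans)
    obtain m' where "G M n i t = (Xi n (plucker M) ^^ m') (G M n i n)"
      using orbit2[OF inv iN order_refl t(1)] by blast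
    then have "R i = (Xi n (plucker M) ^^ m') (gale_min n (plucker M) i)"
      unfolding R_def using gale_min_eq[OF inv iN] by simp
    then have "R i \<in> extremal_indices n M" unfolding extremal_indices_def using i by blast
    moreover have "card (R i) = i" unfolding R_def using G_card[OF inv iN] .
    ultimately show "R i \<in> extremal_indices n M \<and> card (R i) = i" by simp
  qed
  moreover have "\<forall>i. 1 \<le> i \<and> i < n - 1 \<longrightarrow> R i \<subset> R (Suc i)"
  proof (intro allI impI)
    fix i assume i: "1 \<le> i \<and> i < n - 1"
    have "card (R i) = i" "card (R (Suc i)) = Suc i"
      unfolding R_def using G_card[OF inv, of i t] G_card[OF inv, of "Suc i" t] i by auto
    moreover have "R i \<subseteq> R (Suc i)" unfolding R_def by (rule G_mono)
    ultimately show "R i \<subset> R (Suc i)" by auto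
  qed
  moreover have "\<exists>i\<in>{1..n-1}. I = R i" using mk(1) t(2) unfolding R_def by blast
  ultimately show ?thesis by blast
qed

end
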